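(* Let $\ell=p_1^{\alpha_1}\cdots p_\omega^{\alpha_\omega}$ be the prime factorization of a positive integer $\ell$ (distinct primes $p_i$, $\alpha_i\ge1$), and let $\mathcal{A}$ be an $\ell$-Oddtown on $[n]$. For $i\in[\omega]$ let $\mathcal{A}'_i=\{A\in\mathcal{A}: |A|\equiv 0\pmod{p_i^{\alpha_i}}\}$, and let $M_i$ be the $|\mathcal{A}'_i|\times n$ $0$--$1$ matrix whose rows are the characteristic vectors of the sets in $\mathcal{A}'_i$. Call an odd prime $p_i$ dividing $\ell$ good if $M_i$ has at least $n^{0.4}$ distinct columns, and bad otherwise. Then either at most one odd prime divisor of $\ell$ is bad, or \[ |\mathcal{A}|\leq \omega n-n^{0.2}+\omega\ell . \]
   Context: An $\ell$-Oddtown on $[n]=\{1,\dots,n\}$ is a family $\mathcal{A}$ of subsets of $[n]$ such that $|A|\not\equiv 0 \pmod{\ell}$ for every $A\in\mathcal{A}$ and $|A\cap B|\equiv 0\pmod{\ell}$ for all distinct $A,B\in\mathcal{A}$. *)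

theory Defs
  imports Complex_Main "HOL-Computational_Algebra.Primes"
begin

definition oddtown :: "nat \<Rightarrow> nat \<Rightarrow> nat set set \<Rightarrow> bool" where
  "oddtown l n F \<longleftrightarrow>
     (\<forall>A\<in>F. A \<subseteq> {1..n}) \<and>
     (\<forall>A\<in>F. \<not> l dvd card A) \<and>
     (\<forall>A\<in>F. \<forall>B\<in>F. A \<noteq> B \<longrightarrow> l dvd card (A \<inter> B))"

definition subfam :: "nat \<Rightarrow> nat \<Rightarrow> nat set set \<Rightarrow> nat set set" where
  "subfam l p F = {A \<in> F. p ^ multiplicity p l dvd card A}"

text \<open>Number of distinct columns of the 0-1 incidence matrix whose rows are the
  characteristic vectors (over [n]) of the sets in G; column j is identified with
  the indicator of the rows containing j, i.e. the set of rows containing j.\<close>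
definition num_distinct_cols :: "nat \<Rightarrow> nat set set \<Rightarrow> nat" where
  "num_distinct_cols n G = card ((\<lambda>j. {A \<in> G. j \<in> A}) ` {1..n})"

definition bad_prime :: "nat \<Rightarrow> nat \<Rightarrow> nat set set \<Rightarrow> nat \<Rightarrow> bool" where
  "bad_prime l n F p \<longleftrightarrow> prime p \<and> odd p \<and> p dvd l \<and>
     real (num_distinct_cols n (subfam l p F)) < real n powr 0.4"

end

theory Submission
  imports Defs "Jordan_Normal_Form.Determinant"
begin


lemma det_last_row_zero:
  fixes A :: "'a::comm_ring_1 mat"
  assumes A: "A \<in> carrier_mat m m" and r: "r < m" and z: "\<And>j. j < m \<Longrightarrow> A $$ (r, j) = 0"
  shows "det A = 0"
proof -
  have "\<And>\<pi>. \<pi> permutes {0..<m} \<Longrightarrow> (\<Prod>i = 0..<m. A $$ (i, \<pi> i)) = 0"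
  proof -
    fix \<pi> assume "\<pi> permutes {0..<m}"
    then have "\<pi> r < m" using r by (meson atLeastLessThan_iff permutes_in_image zero_le)
    then show "(\<Prod>i = 0..<m. A $$ (i, \<pi> i)) = 0"
      using r z by (intro prod_zero) (auto intro!: bexI[of _ r])
  qed
  then show ?thesis unfolding det_def'[OF A] by simp
qed

lemma det_mod_p:
  fixes H :: "int mat" and p :: int
  assumes H: "H \<in> carrier_mat m m"
    and off: "\<And>i j. i < m \<Longrightarrow> j < m \<Longrightarrow> i \<noteq> j \<Longrightarrow> p dvd H $$ (i, j)"
  shows "p dvd (det H - (\<Prod>i = 0..<m. H $$ (i, i)))"
proof -
  let ?S = "{\<pi>. \<pi> permutes {0..<m}}"
  let ?f = "\<lambda>\<pi>. signof \<pi> * (\<Prod>i = 0..<m. H $$ (i, \<pi> i))"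
  have fin: "finite ?S" by (simp add: finite_permutations)
  have idS: "id \<in> ?S" by (simp add: permutes_id)
  have "det H = ?f id + sum ?f (?S - {id})"
    unfolding det_def'[OF H] using fin idS sum.remove[OF fin idS, of ?f] by simp
  moreover have "?f id = (\<Prod>i = 0..<m. H $$ (i, i))" by simp
  moreover have "p dvd sum ?f (?S - {id})"
  proof (rule dvd_sum)
    fix \<pi> assume "\<pi> \<in> ?S - {id}"
    then have pp: "\<pi> permutes {0..<m}" and ne: "\<pi> \<noteq> id" by auto
    then obtain i where "\<pi> i \<noteq> i" by (metis eq_id_iff)
    then have i: "i < m" using pp by (metis atLeastLessThan_iff permutes_not_in zero_le)
    have "\<pi> i < m" using pp i by (meson atLeastLessThan_iff permutes_in_image zero_le)
    then have "p dvd H $$ (i, \<pi> i)" using off i \<open>\<pi> i \<noteq> i\<close> by auto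
    then have "p dvd (\<Prod>i = 0..<m. H $$ (i, \<pi> i))"
      using i by (meson atLeastLessThan_iff dvd_prod dvd_trans finite_atLeastLessThan zero_le)
    then show "p dvd ?f \<pi>" by simp
  qed
  ultimately show ?thesis by simp
qed

lemma gram_bound:
  fixes X :: "nat \<Rightarrow> nat \<Rightarrow> int" and Y :: "nat \<Rightarrow> nat \<Rightarrow> int"
    and d :: "nat \<Rightarrow> int" and p :: int
  assumes p: "prime p"
    and d0: "\<And>i. i < m \<Longrightarrow> d i \<noteq> 0"
    and ddvd: "\<And>i j. i < m \<Longrightarrow> j < m \<Longrightarrow> d i dvd (\<Sum>r<k. X i r * Y r j)"
    and diag: "\<And>i. i < m \<Longrightarrow> \<not> p dvd ((\<Sum>r<k. X i r * Y r i) div d i)"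
    and off: "\<And>i j. i < m \<Longrightarrow> j < m \<Longrightarrow> i \<noteq> j \<Longrightarrow> p dvd ((\<Sum>r<k. X i r * Y r j) div d i)"
  shows "m \<le> k"
proof (rule ccontr)
  assume "\<not> m \<le> k"
  then have km: "k < m" by simp
  define g where "g i j = (\<Sum>r<k. X i r * Y r j)" for i j
  define Xm where "Xm = mat m m (\<lambda>(i,r). if r < k then X i r else 0)"
  define Ym where "Ym = mat m m (\<lambda>(r,j). if r < k then Y r j else 0)"
  define Hm where "Hm = mat m m (\<lambda>(i,j). g i j div d i)"
  have Xc: "Xm \<in> carrier_mat m m" and Yc: "Ym \<in> carrier_mat m m" and Hc: "Hm \<in> carrier_mat m m"
    unfolding Xm_def Ym_def Hm_def by auto
  have Gc: "Xm * Ym \<in> carrier_mat m m" using Xc Yc by auto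
  have Gent: "(Xm * Ym) $$ (i, j) = g i j" if "i < m" "j < m" for i j
  proof -
    have "(Xm * Ym) $$ (i, j) = (\<Sum>r = 0..<m. Xm $$ (i, r) * Ym $$ (r, j))"
      using that Xc Yc by (simp add: scalar_prod_def)
    also have "\<dots> = (\<Sum>r = 0..<m. if r < k then X i r * Y r j else 0)"
      using that by (intro sum.cong) (auto simp: Xm_def Ym_def)
    also have "\<dots> = (\<Sum>r \<in> {0..<m} \<inter> {r. r < k}. X i r * Y r j)"
      by (simp add: sum.inter_restrict)
    also have "{0..<m} \<inter> {r. r < k} = {..<k}" using km by auto
    finally show ?thesis unfolding g_def by simp
  qed
  have "det Ym = 0"
    by (rule det_last_row_zero[OF Yc, of "m - 1"]) (use km in \<open>auto simp: Ym_def\<close>)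
  then have detG0: "det (Xm * Ym) = 0" using det_mult[OF Xc Yc] by simp
  have GH: "(Xm * Ym) $$ (i, j) = d i * Hm $$ (i, j)" if "i < m" "j < m" for i j
    using that Gent ddvd[OF that] unfolding Hm_def g_def by simp
  have "det (Xm * Ym) = (\<Prod>i = 0..<m. d i) * det Hm"
  proof -
    have "det (Xm * Ym) = (\<Sum>\<pi> | \<pi> permutes {0..<m}. signof \<pi> * (\<Prod>i = 0..<m. (Xm * Ym) $$ (i, \<pi> i)))"
      by (rule det_def'[OF Gc])
    also have "\<dots> = (\<Sum>\<pi> | \<pi> permutes {0..<m}. (\<Prod>i = 0..<m. d i) * (signof \<pi> * (\<Prod>i = 0..<m. Hm $$ (i, \<pi> i))))"
    proof (rule sum.cong[OF refl])
      fix \<pi> assume "\<pi> \<in> {\<pi>. \<pi> permutes {0..<m}}"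
      then have pp: "\<pi> permutes {0..<m}" by simp
      have "(\<Prod>i = 0..<m. (Xm * Ym) $$ (i, \<pi> i)) = (\<Prod>i = 0..<m. d i * Hm $$ (i, \<pi> i))"
      proof (rule prod.cong[OF refl])
        fix i assume "i \<in> {0..<m}"
        moreover then have "\<pi> i < m" using pp by (meson atLeastLessThan_iff permutes_in_image zero_le)
        ultimately show "(Xm * Ym) $$ (i, \<pi> i) = d i * Hm $$ (i, \<pi> i)" using GH by auto
      qed
      then show "signof \<pi> * (\<Prod>i = 0..<m. (Xm * Ym) $$ (i, \<pi> i)) =
          (\<Prod>i = 0..<m. d i) * (signof \<pi> * (\<Prod>i = 0..<m. Hm $$ (i, \<pi> i)))"
        by (simp add: prod.distrib mult_ac)
    qed
    also have "\<dots> = (\<Prod>i = 0..<m. d i) * det Hm"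
      unfolding det_def'[OF Hc] by (simp add: sum_distrib_left)
    finally show ?thesis .
  qed
  moreover have "(\<Prod>i = 0..<m. d i) \<noteq> 0" using d0 by auto
  moreover have "det Hm \<noteq> 0"
  proof
    assume h0: "det Hm = 0"
    have "p dvd (det Hm - (\<Prod>i = 0..<m. Hm $$ (i, i)))"
      by (rule det_mod_p[OF Hc]) (use off in \<open>auto simp: Hm_def g_def\<close>)
    then have "p dvd (\<Prod>i = 0..<m. Hm $$ (i, i))" using h0 by simp
    then obtain i where "i \<in> {0..<m}" "p dvd Hm $$ (i, i)"
      using p by (auto simp: prime_dvd_prod_iff)
    then show False using diag by (auto simp: Hm_def g_def)
  qed
  ultimately show False using detG0 by simp
qed

lemma pow_div_dvd:
  fixes p c v :: nat
  assumes "p ^ Suc v dvd c" "p > 0"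
  shows "p dvd c div p ^ v"
proof -
  obtain t where "c = p ^ Suc v * t" using assms by (auto simp: dvd_def)
  then have "c div p ^ v = p * t" using assms by simp
  then show ?thesis by simp
qed

lemma ppo:
  fixes p a :: nat and S :: "nat set set" and K :: "'k set" and w :: "'k \<Rightarrow> nat"
    and mem :: "'k \<Rightarrow> nat set \<Rightarrow> bool"
  assumes p: "prime p" and finS: "finite S" and finK: "finite K"
    and ndvd: "\<And>A. A \<in> S \<Longrightarrow> \<not> p ^ a dvd card A"
    and idvd: "\<And>A B. A \<in> S \<Longrightarrow> B \<in> S \<Longrightarrow> A \<noteq> B \<Longrightarrow> p ^ a dvd card (A \<inter> B)"
    and rep: "\<And>A B. A \<in> S \<Longrightarrow> B \<in> S \<Longrightarrow>
               card (A \<inter> B) = (\<Sum>r\<in>K. w r * (if mem r A \<and> mem r B then 1 else 0))"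
  shows "card S \<le> card K"
proof -
  define m where "m = card S"
  define k where "k = card K"
  obtain e where e: "bij_betw e {0..<m} S" using ex_bij_betw_nat_finite[OF finS] m_def by auto
  obtain f where f: "bij_betw f {0..<k} K" using ex_bij_betw_nat_finite[OF finK] k_def by auto
  have eS: "e i \<in> S" if "i < m" for i using e that by (auto simp: bij_betw_def)
  have einj: "e i \<noteq> e j" if "i < m" "j < m" "i \<noteq> j" for i j
    using e that by (auto simp: bij_betw_def inj_on_def)
  define X where "X i r = int (w (f r)) * (if mem (f r) (e i) then 1 else 0)" for i r
  define Y where "Y r j = (if mem (f r) (e j) then 1 else (0::int))" for r j
  define c where "c i j = card (e i \<inter> e j)" for i j
  define v where "v i = multiplicity p (card (e i))" for i
  have sumeq: "(\<Sum>r<k. X i r * Y r j) = int (c i j)" if ij: "i < m" "j < m" for i j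
  proof -
    have "(\<Sum>r<k. X i r * Y r j) = (\<Sum>r\<in>{0..<k}. (\<lambda>x. int (w x * (if mem x (e i) \<and> mem x (e j) then 1 else 0))) (f r))"
      by (intro sum.cong) (auto simp: X_def Y_def)
    also have "\<dots> = (\<Sum>x\<in>K. int (w x * (if mem x (e i) \<and> mem x (e j) then 1 else 0)))"
      by (rule sum.reindex_bij_betw[OF f])
    also have "\<dots> = int (card (e i \<inter> e j))"
      using rep[OF eS[OF ij(1)] eS[OF ij(2)]] by (metis of_nat_sum)
    finally show ?thesis by (simp add: c_def)
  qed
  have p1: "\<not> is_unit p" using p by auto
  have cne: "card (e i) \<noteq> 0" if "i < m" for i using ndvd[OF eS[OF that]] by (metis dvd_0_right)
  have vlt: "v i < a" if "i < m" for i
    unfolding v_def by (rule multiplicity_lessI[OF cne[OF that] p1 ndvd[OF eS[OF that]]])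
  have N1: "p ^ v i dvd c i j" if "i < m" "j < m" for i j
  proof (cases "i = j")
    case True then show ?thesis by (simp add: c_def v_def multiplicity_dvd)
  next
    case False
    have "p ^ a dvd c i j" using idvd[OF eS eS einj] that False by (simp add: c_def)
    moreover have "p ^ v i dvd p ^ a" using vlt[OF that(1)] by (simp add: le_imp_power_dvd)
    ultimately show ?thesis by (meson dvd_trans)
  qed
  have N2: "\<not> p dvd c i i div p ^ v i" if "i < m" for i
    using multiplicity_decompose[OF cne[OF that] p1] by (simp add: c_def v_def)
  have N3: "p dvd c i j div p ^ v i" if "i < m" "j < m" "i \<noteq> j" for i j
  proof -
    have "p ^ a dvd c i j" using idvd[OF eS eS einj] that by (simp add: c_def)
    moreover have "p ^ Suc (v i) dvd p ^ a" using vlt[OF that(1)] by (intro le_imp_power_dvd) simp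
    ultimately have "p ^ Suc (v i) dvd c i j" by (meson dvd_trans)
    then show ?thesis using pow_div_dvd p prime_gt_0_nat by blast
  qed
  have pint: "prime (int p)" using p by simp
  have "m \<le> k"
  proof (rule gram_bound[OF pint, where X = X and Y = Y and d = "\<lambda>i. int (p ^ v i)"])
    fix i assume "i < m" then show "int (p ^ v i) \<noteq> 0" using p by auto
  next
    fix i j assume ij: "i < m" "j < m"
    show "int (p ^ v i) dvd (\<Sum>r<k. X i r * Y r j)"
      unfolding sumeq[OF ij] using N1[OF ij] by (metis int_dvd_int_iff)
  next
    fix i assume i: "i < m"
    show "\<not> int p dvd (\<Sum>r<k. X i r * Y r i) div int (p ^ v i)"
      unfolding sumeq[OF i i] using N2[OF i] by (simp flip: of_nat_div of_nat_power)
  next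
    fix i j assume ij: "i < m" "j < m" "i \<noteq> j"
    show "int p dvd (\<Sum>r<k. X i r * Y r j) div int (p ^ v i)"
      unfolding sumeq[OF ij(1,2)] using N3[OF ij] by (simp flip: of_nat_div of_nat_power)
  qed
  then show ?thesis by (simp add: m_def k_def)
qed


lemma poly_aux: fixes x :: real assumes "x \<ge> 0" shows "x^2 + x \<le> x^5 + 6"
proof (cases "x \<le> 2")
  case True
  have "x^2 \<le> 2^2" using True assms by (intro power_mono) auto
  then have "x^2 \<le> 4" by simp
  moreover have "x^5 \<ge> 0" using assms by simp
  ultimately show ?thesis using True by linarith
next
  case False
  have "x^5 = x^3 * x^2" by (simp add: power_add[symmetric])
  moreover have "x^3 \<ge> 2^3" using False assms by (intro power_mono) auto
  then have "2^3 * x^2 \<le> x^3 * x^2" by (rule mult_right_mono) simp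
  ultimately have "x^5 \<ge> 2^3 * x^2" by simp
  then have "x^5 \<ge> 8 * x^2" by simp
  moreover have "x^2 \<ge> x" using False by (simp add: power2_eq_square)
  moreover have "x^2 \<ge> 0" by simp
  ultimately show ?thesis by linarith
qed
lemma pw: fixes n :: nat assumes "n > 0"
  shows "real n powr 0.4 = (real n powr 0.2)^2" "real n = (real n powr 0.2)^5"
proof -
  have "(real n powr 0.2)^2 = real n powr (0.2 * 2)" using assms by (simp add: powr_realpow[symmetric] powr_powr)
  then show "real n powr 0.4 = (real n powr 0.2)^2" by simp
  have "(real n powr 0.2)^5 = real n powr (0.2 * 5)" using assms by (simp add: powr_realpow[symmetric] powr_powr)
  then show "real n = (real n powr 0.2)^5" using assms by simp
qed

theorem lemma3p2:
  fixes l n :: nat and F :: "nat set set"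
  assumes "l > 0"
    and "oddtown l n F"
  shows "card {p. bad_prime l n F p} \<le> 1 \<or>
         real (card F) \<le> real (card (prime_factors l)) * real n - real n powr 0.2
                           + real (card (prime_factors l)) * real l"
proof (cases "card {p. bad_prime l n F p} \<le> 1")
  case True then show ?thesis by simp
next
  case False
  then have c2: "card {p. bad_prime l n F p} \<ge> 2" by simp
  then have "finite {p. bad_prime l n F p}" by (metis card.infinite not_numeral_le_zero)
  obtain p q where pb: "bad_prime l n F p" and qb: "bad_prime l n F q" and pq: "p \<noteq> q"
  proof -
    from c2 obtain T where "T \<subseteq> {p. bad_prime l n F p}" "card T = 2"
      by (meson obtain_subset_with_card_n)
    then obtain x y where "x \<noteq> y" "T = {x, y}" by (meson card_2_iff)
    then show ?thesis using that \<open>T \<subseteq> _\<close> by auto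
  qed
  have l0: "l \<noteq> 0" using assms(1) by simp
  define P where "P = prime_factors l"
  define \<omega> where "\<omega> = card P"
  have pP: "p \<in> P" and qP: "q \<in> P" using pb qb l0 by (auto simp: P_def bad_prime_def in_prime_factors_iff)
  have finP: "finite P" by (simp add: P_def)
  have om2: "\<omega> \<ge> 2"
  proof -
    have "{p, q} \<subseteq> P" using pP qP by auto
    then have "card {p, q} \<le> \<omega>" unfolding \<omega>_def by (rule card_mono[OF finP])
    then show ?thesis using pq by simp
  qed
  have pprime: "prime p" and podd: "odd p" and pdl: "p dvd l" using pb by (auto simp: bad_prime_def)
  have p3: "p \<ge> 3" using pprime podd prime_ge_2_nat[OF pprime]
    by (metis dvd_refl le_antisym not_less_eq_eq numeral_2_eq_2 numeral_3_eq_3)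
  have l3: "l \<ge> 3" using pdl l0 p3 by (meson dual_order.trans dvd_imp_le assms(1))
  have n0: "n > 0"
  proof (rule ccontr)
    assume "\<not> n > 0" then have "n = 0" by simp
    then show False using pb by (simp add: bad_prime_def)
  qed
  have Fsub: "\<And>A. A \<in> F \<Longrightarrow> A \<subseteq> {1..n}" and Fnd: "\<And>A. A \<in> F \<Longrightarrow> \<not> l dvd card A"
    and Fint: "\<And>A B. A \<in> F \<Longrightarrow> B \<in> F \<Longrightarrow> A \<noteq> B \<Longrightarrow> l dvd card (A \<inter> B)"
    using assms(2) by (auto simp: oddtown_def)
  have finF: "finite F"
  proof -
    have "F \<subseteq> Pow {1..n}" using Fsub by auto
    then show ?thesis by (rule finite_subset) simp
  qed
  define Fj where "Fj j = F - subfam l j F" for j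
  define Ap where "Ap = subfam l p F"
  define col where "col x = {A \<in> Ap. x \<in> A}" for x
  define t where "t = num_distinct_cols n Ap"
  have tdef: "t = card (col ` {1..n})" by (simp add: t_def num_distinct_cols_def col_def)
  have ApF: "Ap \<subseteq> F" by (auto simp: Ap_def subfam_def)
  have Fjdvd: "\<And>A B j. j \<in> P \<Longrightarrow> A \<in> F \<Longrightarrow> B \<in> F \<Longrightarrow> A \<noteq> B \<Longrightarrow> j ^ multiplicity j l dvd card (A \<inter> B)"
    using Fint by (meson dvd_trans multiplicity_dvd)
  have jprime: "\<And>j. j \<in> P \<Longrightarrow> prime j" by (auto simp: P_def)
  have c1: "card (Fj p) \<le> n"
  proof -
    have "card (Fj p) \<le> card {1..n}"
    proof (rule ppo[OF pprime _ _, where a = "multiplicity p l" and w = "\<lambda>_. 1" and mem = "\<lambda>r A. r \<in> A"])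
      show "finite (Fj p)" using finF by (simp add: Fj_def)
      show "finite {1..n}" by simp
      show "\<And>A. A \<in> Fj p \<Longrightarrow> \<not> p ^ multiplicity p l dvd card A"
        by (auto simp: Fj_def subfam_def)
      show "\<And>A B. A \<in> Fj p \<Longrightarrow> B \<in> Fj p \<Longrightarrow> A \<noteq> B \<Longrightarrow> p ^ multiplicity p l dvd card (A \<inter> B)"
        using Fjdvd[OF pP] by (auto simp: Fj_def)
      fix A B assume AB: "A \<in> Fj p" "B \<in> Fj p"
      then have "A \<inter> B \<subseteq> {1..n}" using Fsub by (auto simp: Fj_def)
      then have "A \<inter> B = {1..n} \<inter> {r. r \<in> A \<and> r \<in> B}" by auto
      then show "card (A \<inter> B) = (\<Sum>r\<in>{1..n}. 1 * (if r \<in> A \<and> r \<in> B then 1 else 0))"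
        by (simp add: sum.If_cases)
    qed
    then show ?thesis by simp
  qed
  have c2: "card (Ap \<inter> Fj j) \<le> t" if jP: "j \<in> P" for j
  proof -
    have "card (Ap \<inter> Fj j) \<le> card (col ` {1..n})"
    proof (rule ppo[OF jprime[OF jP] _ _, where a = "multiplicity j l"
          and w = "\<lambda>c. card {x \<in> {1..n}. col x = c}" and mem = "\<lambda>c A. A \<in> c"])
      show "finite (Ap \<inter> Fj j)" using finF by (simp add: Fj_def)
      show "finite (col ` {1..n})" by simp
      show "\<And>A. A \<in> Ap \<inter> Fj j \<Longrightarrow> \<not> j ^ multiplicity j l dvd card A"
        by (auto simp: Fj_def subfam_def)
      show "\<And>A B. A \<in> Ap \<inter> Fj j \<Longrightarrow> B \<in> Ap \<inter> Fj j \<Longrightarrow> A \<noteq> B \<Longrightarrow> j ^ multiplicity j l dvd card (A \<inter> B)"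
        using Fjdvd[OF jP] by (auto simp: Fj_def)
      fix A B assume AB: "A \<in> Ap \<inter> Fj j" "B \<in> Ap \<inter> Fj j"
      define g where "g c = (if A \<in> c \<and> B \<in> c then 1 else (0::nat))" for c
      have "(\<Sum>c\<in>col ` {1..n}. card {x \<in> {1..n}. col x = c} * g c)
          = (\<Sum>c\<in>col ` {1..n}. \<Sum>x | x \<in> {1..n} \<and> col x = c. g (col x))"
        by (intro sum.cong) auto
      also have "\<dots> = (\<Sum>x\<in>{1..n}. g (col x))"
        by (rule sum.image_gen[symmetric]) simp
      also have "\<dots> = (\<Sum>x\<in>{1..n}. (if x \<in> A \<and> x \<in> B then 1 else 0))"
        using AB by (intro sum.cong) (auto simp: g_def col_def)
      also have "\<dots> = card ({1..n} \<inter> {r. r \<in> A \<and> r \<in> B})"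
        by (simp add: sum.If_cases)
      also have "{1..n} \<inter> {r. r \<in> A \<and> r \<in> B} = A \<inter> B"
        using AB ApF Fsub by blast
      finally show "card (A \<inter> B) = (\<Sum>c\<in>col ` {1..n}. card {x \<in> {1..n}. col x = c} * (if A \<in> c \<and> B \<in> c then 1 else 0))"
        by (simp add: g_def)
    qed
    then show ?thesis by (simp add: tdef)
  qed
  have cover: "Ap \<subseteq> (\<Union>j\<in>P - {p}. Ap \<inter> Fj j)"
  proof
    fix A assume A: "A \<in> Ap"
    show "A \<in> (\<Union>j\<in>P - {p}. Ap \<inter> Fj j)"
    proof (rule ccontr)
      assume "A \<notin> (\<Union>j\<in>P - {p}. Ap \<inter> Fj j)"
      then have allj: "\<And>j. j \<in> P \<Longrightarrow> j ^ multiplicity j l dvd card A"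
        using A ApF by (auto simp: Fj_def subfam_def Ap_def)
      have "l dvd card A"
      proof (cases "card A = 0")
        case True then show ?thesis by simp
      next
        case False
        show ?thesis
        proof (rule multiplicity_le_imp_dvd[OF l0])
          fix r :: nat assume r: "prime r"
          show "multiplicity r l \<le> multiplicity r (card A)"
          proof (cases "r \<in> P")
            case True
            have "\<not> is_unit r" using r by auto
            then show ?thesis using multiplicity_geI[OF False _ allj[OF True]] by simp
          next
            case False
            then have "\<not> r dvd l" using r l0 by (auto simp: P_def in_prime_factors_iff)
            then show ?thesis by (simp add: not_dvd_imp_multiplicity_0)
          qed
        qed
      qed
      then show False using Fnd A ApF by auto
    qed
  qed
  have cAp: "card Ap \<le> (\<omega> - 1) * t"
  proof -
    have "card Ap \<le> card (\<Union>j\<in>P - {p}. Ap \<inter> Fj j)"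
      using cover finF by (intro card_mono) (auto simp: Fj_def)
    also have "\<dots> \<le> (\<Sum>j\<in>P - {p}. card (Ap \<inter> Fj j))" by (rule card_UN_le) (simp add: finP)
    also have "\<dots> \<le> (\<Sum>j\<in>P - {p}. t)" using c2 by (intro sum_mono) auto
    also have "\<dots> = (\<omega> - 1) * t" using pP finP by (simp add: \<omega>_def)
    finally show ?thesis .
  qed
  have cF: "card F \<le> n + (\<omega> - 1) * t"
  proof -
    have "F = Fj p \<union> Ap" using ApF by (auto simp: Fj_def Ap_def)
    then have "card F \<le> card (Fj p) + card Ap" by (metis card_Un_le)
    then show ?thesis using c1 cAp by simp
  qed
  have tn: "t \<le> n" unfolding tdef by (metis card_atLeastAtMost card_image_le finite_atLeastAtMost diff_Suc_1)
  have tlt: "real t < real n powr 0.4" using pb by (simp add: bad_prime_def t_def Ap_def)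
  define x where "x = real n powr 0.2"
  have x0: "x \<ge> 0" by (simp add: x_def)
  have x2: "real n powr 0.4 = x^2" and x5: "real n = x^5" using pw[OF n0] by (simp_all add: x_def)
  have pa: "x^2 + x \<le> x^5 + 6" by (rule poly_aux[OF x0])
  have om: "real \<omega> \<ge> 2" using om2 by simp
  have cFr: "real (card F) \<le> real n + (real \<omega> - 1) * real t"
  proof -
    have "real (card F) \<le> real (n + (\<omega> - 1) * t)" using cF by (simp only: of_nat_le_iff)
    also have "real (n + (\<omega> - 1) * t) = real n + (real \<omega> - 1) * real t"
      using om2 by (simp add: of_nat_diff)
    finally show ?thesis .
  qed
  have "(real \<omega> - 1) * (real n - real t) \<ge> 1 * (real n - real t)"
    using om tn by (intro mult_right_mono) auto
  moreover have "real \<omega> * real l \<ge> 2 * 3" using om l3 by (intro mult_mono) auto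
  ultimately have "real (card F) \<le> real \<omega> * real n - x + real \<omega> * real l"
    using cFr tlt x2 x5 pa by (simp add: algebra_simps)
  then show ?thesis
    by (simp add: x_def \<omega>_def P_def)
qed

end
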